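(* Let $(K,\le)$ be a linearly ordered set which is compact in its order topology. The following are equivalent: (1) $K$ is almost totally disconnected; (2) there is a family $\{(a_i,b_i)\}_{i\in I}\subseteq K\times K$ such that (a) $a_i<b_i$ for every $i\in I$; (b) for every $x\in K$ the set $\{i\in I: a_i<x<b_i\}$ is countable; (c) for all $x<y$ in $K$ there is $i\in I$ with $x\le a_i<b_i\le y$.
   Context: For a set $\Gamma$, $\Sigma_0^1[0,1]^\Gamma$ is the subspace of $[0,1]^\Gamma$ (product topology) consisting of those $x$ with $x_\gamma\in\{0,1\}$ for all but countably many $\gamma$. A compact space is almost totally disconnected if it is homeomorphic to a subspace of $\Sigma_0^1[0,1]^\Gamma$ for some set $\Gamma$. *)

theory Defs
  imports "HOL-Analysis.Analysis"
begin

text \<open>The cube [0,1]^Gamma with the product topology (points are extensional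
  functions on Gamma).\<close>
definition cube01 :: "'g set \<Rightarrow> ('g \<Rightarrow> real) topology" where
  "cube01 \<Gamma> = product_topology (\<lambda>_. top_of_set {0..1}) \<Gamma>"

definition Sigma01 :: "'g set \<Rightarrow> ('g \<Rightarrow> real) set" where
  "Sigma01 \<Gamma> = {x \<in> topspace (cube01 \<Gamma>). countable {\<gamma> \<in> \<Gamma>. x \<gamma> \<notin> {0, 1}}}"

text \<open>X is almost totally disconnected, witnessed by the index set Gamma:
  X is compact and homeomorphic to a subspace of Sigma01 Gamma.\<close>
definition atd_wrt :: "'a topology \<Rightarrow> 'g set \<Rightarrow> bool" where
  "atd_wrt X \<Gamma> \<longleftrightarrow> compact_space X \<and>
     (\<exists>S \<subseteq> Sigma01 \<Gamma>. X homeomorphic_space subtopology (cube01 \<Gamma>) S)"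

end

theory Submission
  imports Defs
begin

lemma Hausdorff_lin: "Hausdorff_space (euclidean :: 'a::linorder_topology topology)"
  unfolding Hausdorff_space_def disjnt_def by (metis hausdorff open_openin)

lemma sep_interval:
  fixes g :: "'a::linorder_topology \<Rightarrow> real"
  assumes cpt: "compact (UNIV :: 'a set)" and cont: "continuous_on UNIV g"
    and xy: "x < y" and gx: "g x < p" and pq: "p < q" and gy: "q < g y"
  shows "\<exists>s t. x \<le> s \<and> s < t \<and> t \<le> y \<and> g s \<le> p \<and> q \<le> g t \<and>
              (\<forall>z. s < z \<and> z < t \<longrightarrow> p < g z \<and> g z < q)"
proof -
  have cI: "\<And>u v::'a. compact {u..v}"
    using compact_Int_closed[OF cpt closed_atLeastAtMost] by simp
  let ?S = "{x..y} \<inter> {z. g z \<le> p}"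
  have cS: "compact ?S"
    by (intro compact_Int_closed cI closed_Collect_le cont continuous_on_const)
  have "x \<in> ?S" using xy gx by auto
  then obtain s where s: "s \<in> ?S" "\<forall>z\<in>?S. z \<le> s"
    using compact_attains_sup[OF cS] by blast
  have "s \<le> y" "s \<noteq> y" using s gy pq by auto
  hence sy: "s < y" by simp
  let ?T = "{s..y} \<inter> {z. q \<le> g z}"
  have cT: "compact ?T"
    by (intro compact_Int_closed cI closed_Collect_le cont continuous_on_const)
  have "y \<in> ?T" using sy gy by auto
  then obtain t where t: "t \<in> ?T" "\<forall>z\<in>?T. t \<le> z"
    using compact_attains_inf[OF cT] by blast
  have "s \<le> t" "s \<noteq> t" using s t pq by auto
  hence st: "s < t" by simp
  show ?thesis
  proof (intro exI conjI allI impI)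
    show "x \<le> s" "s < t" "t \<le> y" "g s \<le> p" "q \<le> g t" using s t st by auto
  next
    fix z assume z: "s < z \<and> z < t"
    have zx: "z \<in> {x..y}" using z s t by auto
    show "p < g z"
    proof (rule ccontr)
      assume "\<not> p < g z" then have "z \<in> ?S" using zx by auto
      hence "z \<le> s" using s(2) by blast
      then show False using z by (meson leD)
    qed
    show "g z < q"
    proof (rule ccontr)
      assume "\<not> g z < q" then have "z \<in> ?T" using zx z by auto
      hence "t \<le> z" using t(2) by blast
      then show False using z by (meson leD)
    qed
  qed
qed


lemma dir1:
  assumes cpt: "compact (UNIV :: 'a::linorder_topology set)"
    and atd: "atd_wrt (euclidean :: 'a topology) (\<Gamma> :: 'g set)"
  shows "\<exists>P :: ('a \<times> 'a) set.
               (\<forall>(a, b) \<in> P. a < b) \<and>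
               (\<forall>x. countable {(a, b) \<in> P. a < x \<and> x < b}) \<and>
               (\<forall>x y. x < y \<longrightarrow> (\<exists>(a, b) \<in> P. x \<le> a \<and> a < b \<and> b \<le> y))"
proof -
  obtain S where SS: "S \<subseteq> Sigma01 \<Gamma>" and hom: "(euclidean :: 'a topology) homeomorphic_space subtopology (cube01 \<Gamma>) S"
    using atd[unfolded atd_wrt_def] by blast
  then obtain h where hh: "homeomorphic_map (euclidean :: 'a topology) (subtopology (cube01 \<Gamma>) S) h"
    using homeomorphic_space by blast
  have hc: "continuous_map euclidean (cube01 \<Gamma>) h"
    using homeomorphic_imp_continuous_map[OF hh] continuous_map_in_subtopology by blast
  have hS: "h x \<in> Sigma01 \<Gamma>" for x
    using homeomorphic_imp_surjective_map[OF hh] SS by auto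
  have hinj: "inj h"
    using homeomorphic_imp_injective_map[OF hh] by simp
  have hPi: "h x \<in> (\<Pi>\<^sub>E \<gamma>\<in>\<Gamma>. {0..1})" for x
    using hS[of x] unfolding Sigma01_def cube01_def by simp
  have hcnt: "countable {\<gamma> \<in> \<Gamma>. h x \<gamma> \<notin> {0, 1}}" for x
    using hS[of x] unfolding Sigma01_def by simp
  have gc: "continuous_on UNIV (\<lambda>x. h x \<gamma>)" if "\<gamma> \<in> \<Gamma>" for \<gamma>
  proof -
    have "continuous_map euclidean (top_of_set {0..1::real}) (\<lambda>x. h x \<gamma>)"
      using continuous_map_compose[OF hc[unfolded cube01_def] continuous_map_product_projection[OF that]]
      unfolding cube01_def by (simp add: o_def)
    then have "continuous_map euclidean euclideanreal (\<lambda>x. h x \<gamma>)"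
      using continuous_map_in_subtopology by blast
    then show ?thesis by simp
  qed
  define P where "P = {(a,b). a < b \<and> (\<exists>\<gamma>\<in>\<Gamma>. \<exists>p\<in>\<rat>. \<exists>q\<in>\<rat>. 0 < p \<and> p < q \<and> q < 1 \<and>
      (\<forall>z. a < z \<and> z < b \<longrightarrow> p < h z \<gamma> \<and> h z \<gamma> < q) \<and>
      \<not> (p < h a \<gamma> \<and> h a \<gamma> < q) \<and> \<not> (p < h b \<gamma> \<and> h b \<gamma> < q))}"
  have mkP: "(a,b) \<in> P" if "a < b" "\<gamma> \<in> \<Gamma>" "p \<in> \<rat>" "q \<in> \<rat>" "0 < p" "p < q" "q < 1"
      "\<forall>z. a < z \<and> z < b \<longrightarrow> p < h z \<gamma> \<and> h z \<gamma> < q"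
      "\<not> (p < h a \<gamma> \<and> h a \<gamma> < q)" "\<not> (p < h b \<gamma> \<and> h b \<gamma> < q)" for a b \<gamma> p q
    unfolding P_def mem_Collect_eq prod.case using that by blast
  have P1: "\<forall>(a, b) \<in> P. a < b" unfolding P_def by auto
  have P2: "countable {(a, b) \<in> P. a < x \<and> x < b}" for x
  proof -
    let ?A = "{(a, b) \<in> P. a < x \<and> x < b}"
    let ?C = "{\<gamma> \<in> \<Gamma>. h x \<gamma> \<notin> {0, 1}}"
    let ?W = "\<lambda>ab (\<gamma>, p, q). \<gamma> \<in> ?C \<and> p \<in> \<rat> \<and> q \<in> \<rat> \<and> 0 < p \<and> p < q \<and> q < 1 \<and>
      (\<forall>z. fst ab < z \<and> z < snd ab \<longrightarrow> p < h z \<gamma> \<and> h z \<gamma> < q) \<and>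
      \<not> (p < h (fst ab) \<gamma> \<and> h (fst ab) \<gamma> < q) \<and> \<not> (p < h (snd ab) \<gamma> \<and> h (snd ab) \<gamma> < q)"
    define F where "F ab = (SOME w. ?W ab w)" for ab
    have Wex: "?W ab (F ab)" if "ab \<in> ?A" for ab
    proof -
      obtain a b where ab: "ab = (a,b)" by fastforce
      with that obtain \<gamma> p q where g: "\<gamma> \<in> \<Gamma>" "p \<in> \<rat>" "q \<in> \<rat>" "0 < p" "p < q" "q < 1"
        "\<forall>z. a < z \<and> z < b \<longrightarrow> p < h z \<gamma> \<and> h z \<gamma> < q"
        "\<not> (p < h a \<gamma> \<and> h a \<gamma> < q)" "\<not> (p < h b \<gamma> \<and> h b \<gamma> < q)" and ax: "a < x" "x < b"
        unfolding P_def by auto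
      have "p < h x \<gamma>" "h x \<gamma> < q" using g(7) ax by auto
      then have "\<gamma> \<in> ?C" using g by auto
      then have "?W ab (\<gamma>, p, q)" using g ab by simp
      then show ?thesis unfolding F_def by (rule someI)
    qed
    have "F ` ?A \<subseteq> ?C \<times> \<rat> \<times> \<rat>"
    proof
      fix w assume "w \<in> F ` ?A"
      then obtain ab where "ab \<in> ?A" "w = F ab" by blast
      then show "w \<in> ?C \<times> \<rat> \<times> \<rat>" using Wex[of ab] by (cases w) auto
    qed
    moreover have "countable (?C \<times> \<rat> \<times> \<rat>)"
      by (intro countable_SIGMA hcnt countable_rat)
    ultimately have "countable (F ` ?A)" by (rule countable_subset)
    moreover have "inj_on F ?A"
    proof (rule inj_onI)
      fix ab ab' assume A: "ab \<in> ?A" "ab' \<in> ?A" and E: "F ab = F ab'"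
      obtain \<gamma> p q where w: "F ab = (\<gamma>, p, q)" by (metis prod.exhaust)
      have W1: "?W ab (\<gamma>, p, q)" using Wex[OF A(1)] w by simp
      have W2: "?W ab' (\<gamma>, p, q)" using Wex[OF A(2)] w E by simp
      obtain a b where ab: "ab = (a,b)" by fastforce
      obtain a' b' where ab': "ab' = (a',b')" by fastforce
      have o: "a < x" "x < b" "a' < x" "x < b'" using A ab ab' by auto
      have I1: "\<forall>z. a < z \<and> z < b \<longrightarrow> p < h z \<gamma> \<and> h z \<gamma> < q"
        "\<not> (p < h a \<gamma> \<and> h a \<gamma> < q)" "\<not> (p < h b \<gamma> \<and> h b \<gamma> < q)"
        using W1 ab by auto
      have I2: "\<forall>z. a' < z \<and> z < b' \<longrightarrow> p < h z \<gamma> \<and> h z \<gamma> < q"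
        "\<not> (p < h a' \<gamma> \<and> h a' \<gamma> < q)" "\<not> (p < h b' \<gamma> \<and> h b' \<gamma> < q)"
        using W2 ab' by auto
      have n1: "\<not> a < a'"
      proof
        assume "a < a'" then have "a' < b" using o by (meson order.strict_trans)
        then show False using I1(1) I2(2) \<open>a < a'\<close> by blast
      qed
      have n2: "\<not> a' < a"
      proof
        assume "a' < a" then have "a < b'" using o by (meson order.strict_trans)
        then show False using I2(1) I1(2) \<open>a' < a\<close> by blast
      qed
      have n3: "\<not> b < b'"
      proof
        assume "b < b'" then have "a' < b" using o by (meson order.strict_trans)
        then show False using I2(1) I1(3) \<open>b < b'\<close> by blast
      qed
      have n4: "\<not> b' < b"
      proof
        assume "b' < b" then have "a < b'" using o by (meson order.strict_trans)
        then show False using I1(1) I2(3) \<open>b' < b\<close> by blast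
      qed
      have "a = a'" by (rule antisym[OF leI[OF n2] leI[OF n1]])
      moreover have "b = b'" by (rule antisym[OF leI[OF n4] leI[OF n3]])
      ultimately show "ab = ab'" using ab ab' by simp
    qed
    ultimately show ?thesis by (rule countable_image_inj_on)
  qed
  have P3: "\<exists>(a, b) \<in> P. x \<le> a \<and> a < b \<and> b \<le> y" if xy: "x < y" for x y
  proof -
    have "h x \<noteq> h y" using hinj xy by (metis inj_eq less_irrefl)
    then obtain \<gamma> where "h x \<gamma> \<noteq> h y \<gamma>" by blast
    moreover have "\<gamma> \<in> \<Gamma>"
    proof (rule ccontr)
      assume "\<gamma> \<notin> \<Gamma>"
      then have "h x \<gamma> = undefined" "h y \<gamma> = undefined" using hPi[of x] hPi[of y] by (auto simp: PiE_def extensional_def)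
      then show False using calculation by simp
    qed
    ultimately have g: "\<gamma> \<in> \<Gamma>" "h x \<gamma> \<noteq> h y \<gamma>" by auto
    have r01: "0 \<le> h z \<gamma> \<and> h z \<gamma> \<le> 1" for z using hPi[of z] g(1) by auto
    have gcg: "continuous_on UNIV (\<lambda>x. h x \<gamma>)" using gc g(1) by blast
    show ?thesis
    proof (cases "h x \<gamma> < h y \<gamma>")
      case True
      obtain p where p: "p \<in> \<rat>" "h x \<gamma> < p" "p < h y \<gamma>" using Rats_dense_in_real[OF True] by blast
      obtain q where q: "q \<in> \<rat>" "p < q" "q < h y \<gamma>" using Rats_dense_in_real[OF p(3)] by blast
      obtain s t where st: "x \<le> s" "s < t" "t \<le> y" "h s \<gamma> \<le> p" "q \<le> h t \<gamma>"
          "\<forall>z. s < z \<and> z < t \<longrightarrow> p < h z \<gamma> \<and> h z \<gamma> < q"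
        using sep_interval[OF cpt gcg xy p(2) q(2) q(3)] by blast
      have "0 < p" "q < 1" using r01[of x] r01[of y] p q by auto
      moreover have "\<forall>z. s < z \<and> z < t \<longrightarrow> p < h z \<gamma> \<and> h z \<gamma> < q" using st(6) by auto
      moreover have "\<not> (p < h s \<gamma> \<and> h s \<gamma> < q)" "\<not> (p < h t \<gamma> \<and> h t \<gamma> < q)" using st(4,5) by auto
      ultimately have "(s,t) \<in> P" using mkP[of s t \<gamma> p q] st(2) g(1) p(1) q(1,2) by blast
      then show ?thesis using st by blast
    next
      case False
      then have F: "h y \<gamma> < h x \<gamma>" using g by auto
      obtain p where p: "p \<in> \<rat>" "h y \<gamma> < p" "p < h x \<gamma>" using Rats_dense_in_real[OF F] by blast
      obtain q where q: "q \<in> \<rat>" "p < q" "q < h x \<gamma>" using Rats_dense_in_real[OF p(3)] by blast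
      have gcm: "continuous_on UNIV (\<lambda>x. - h x \<gamma>)" using gcg by (intro continuous_intros)
      obtain s t where st: "x \<le> s" "s < t" "t \<le> y" "- h s \<gamma> \<le> - q" "- p \<le> - h t \<gamma>"
          "\<forall>z. s < z \<and> z < t \<longrightarrow> - q < - h z \<gamma> \<and> - h z \<gamma> < - p"
        using sep_interval[OF cpt gcm xy, of "-q" "-p"] q p by auto
      have "0 < p" "q < 1" using r01[of x] r01[of y] p q by auto
      moreover have "\<forall>z. s < z \<and> z < t \<longrightarrow> p < h z \<gamma> \<and> h z \<gamma> < q" using st(6) by auto
      moreover have "\<not> (p < h s \<gamma> \<and> h s \<gamma> < q)" "\<not> (p < h t \<gamma> \<and> h t \<gamma> < q)" using st(4,5) by auto
      ultimately have "(s,t) \<in> P" using mkP[of s t \<gamma> p q] st(2) g(1) p(1) q(1,2) by blast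
      then show ?thesis using st by blast
    qed
  qed
  show ?thesis using P1 P2 P3 by blast
qed


lemma dir2:
  assumes cpt: "compact (UNIV :: 'a::linorder_topology set)"
    and P1: "\<forall>(a, b) \<in> P. a < b"
    and P2: "\<forall>x. countable {(a, b) \<in> P. a < x \<and> x < b}"
    and P3: "\<forall>x y. x < y \<longrightarrow> (\<exists>(a, b) \<in> P. x \<le> a \<and> a < b \<and> b \<le> y)"
  shows "atd_wrt (euclidean :: 'a topology) (P :: ('a \<times> 'a) set)"
proof -
  have cs: "compact_space (euclidean :: 'a topology)"
    using cpt by (simp add: compact_space_def)
  have ns: "normal_space (euclidean :: 'a topology)"
    using compact_Hausdorff_or_regular_imp_normal_space[OF cs] Hausdorff_lin by blast
  have "\<exists>f. continuous_map euclidean (top_of_set {0..1::real}) f \<and> f ` {..fst i} \<subseteq> {0} \<and> f ` {snd i..} \<subseteq> {1}"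
    if "i \<in> P" for i
  proof -
    have lt: "fst i < snd i" using P1 that by auto
    have "disjnt {..fst i} {snd i..}" using lt by (auto simp: disjnt_def)
    then obtain f where "continuous_map euclidean (top_of_set {0..1::real}) f" "f ` {..fst i} \<subseteq> {0}" "f ` {snd i..} \<subseteq> {1}"
      using Urysohn_lemma[OF ns, of "{..fst i}" "{snd i..}" 0 1] by auto
    then show ?thesis by blast
  qed
  then obtain F where F: "\<And>i. i \<in> P \<Longrightarrow> continuous_map euclidean (top_of_set {0..1::real}) (F i) \<and> F i ` {..fst i} \<subseteq> {0} \<and> F i ` {snd i..} \<subseteq> {1}"
    by metis
  define h where "h x = (\<lambda>i\<in>P. F i x)" for x
  have hc: "continuous_map euclidean (cube01 P) h"
    unfolding cube01_def continuous_map_componentwise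
  proof (intro conjI ballI)
    show "h ` topspace euclidean \<subseteq> extensional P" unfolding h_def by auto
    fix k assume k: "k \<in> P"
    show "continuous_map euclidean (top_of_set {0..1}) (\<lambda>x. h x k)"
      using F[OF k] k by (simp add: h_def)
  qed
  have F0: "F i x = 0" if "i \<in> P" "x \<le> fst i" for i x using F[OF that(1)] that(2) by auto
  have F1: "F i x = 1" if "i \<in> P" "snd i \<le> x" for i x using F[OF that(1)] that(2) by auto
  have hS: "h x \<in> Sigma01 P" for x
  proof -
    have "h x \<in> topspace (cube01 P)" using hc by (simp add: continuous_map_def Pi_iff)
    moreover have "{\<gamma> \<in> P. h x \<gamma> \<notin> {0, 1}} \<subseteq> {(a, b) \<in> P. a < x \<and> x < b}"
    proof (rule subsetI)
      fix i assume i: "i \<in> {\<gamma> \<in> P. h x \<gamma> \<notin> {0, 1}}"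
      obtain a b where iab: "i = (a,b)" by fastforce
      have ab: "(a,b) \<in> P" "h x (a,b) \<notin> {0,1}" using i iab by auto
      then have "F (a,b) x \<noteq> 0" "F (a,b) x \<noteq> 1" by (auto simp: h_def)
      then have "a < x \<and> x < b" using F0[OF ab(1)] F1[OF ab(1)] by (auto simp: not_le[symmetric])
      then show "i \<in> {(a, b) \<in> P. a < x \<and> x < b}" using ab iab by auto
    qed
    then have "countable {\<gamma> \<in> P. h x \<gamma> \<notin> {0, 1}}" using P2 countable_subset by blast
    ultimately show ?thesis unfolding Sigma01_def by simp
  qed
  have hinj: "inj_on h (topspace euclidean)"
  proof (rule inj_onI)
    have key: "h x \<noteq> h y" if xy: "x < y" for x y
    proof -
      obtain a b where ab: "(a,b) \<in> P" "x \<le> a" "a < b" "b \<le> y" using P3 xy by blast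
      have "h x (a,b) = 0" using F0[OF ab(1)] ab by (simp add: h_def)
      moreover have "h y (a,b) = 1" using F1[OF ab(1)] ab by (simp add: h_def)
      ultimately show ?thesis by auto
    qed
    fix x y assume "h x = h y"
    then show "x = y" using key by (metis linorder_neqE)
  qed
  have hom: "homeomorphic_map euclidean (subtopology (cube01 P) (range h)) h"
  proof (rule continuous_imp_homeomorphic_map)
    show "continuous_map euclidean (subtopology (cube01 P) (range h)) h"
      using hc by (simp add: continuous_map_in_subtopology)
    show "compact_space (euclidean :: 'a topology)" by (rule cs)
    have "Hausdorff_space (cube01 P)"
      unfolding cube01_def Hausdorff_space_product_topology
      by (simp add: Hausdorff_space_subtopology)
    then show "Hausdorff_space (subtopology (cube01 P) (range h))"
      by (rule Hausdorff_space_subtopology)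
    show "h ` topspace euclidean = topspace (subtopology (cube01 P) (range h))"
      using hc by (auto simp: continuous_map_def)
    show "inj_on h (topspace euclidean)" by (rule hinj)
  qed
  show ?thesis unfolding atd_wrt_def
    using cs hS hom homeomorphic_map_imp_homeomorphic_space by blast
qed

theorem lemma4:
  fixes \<gamma>type :: "'g itself"
  assumes "compact (UNIV :: 'a::linorder_topology set)"
  shows "((\<exists>\<Gamma> :: 'g set. atd_wrt (euclidean :: 'a topology) \<Gamma>) \<longrightarrow>
            (\<exists>P :: ('a \<times> 'a) set.
               (\<forall>(a, b) \<in> P. a < b) \<and>
               (\<forall>x. countable {(a, b) \<in> P. a < x \<and> x < b}) \<and>
               (\<forall>x y. x < y \<longrightarrow> (\<exists>(a, b) \<in> P. x \<le> a \<and> a < b \<and> b \<le> y))))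
       \<and> ((\<exists>P :: ('a \<times> 'a) set.
               (\<forall>(a, b) \<in> P. a < b) \<and>
               (\<forall>x. countable {(a, b) \<in> P. a < x \<and> x < b}) \<and>
               (\<forall>x y. x < y \<longrightarrow> (\<exists>(a, b) \<in> P. x \<le> a \<and> a < b \<and> b \<le> y)))
            \<longrightarrow> (\<exists>\<Gamma> :: ('a \<times> 'a) set. atd_wrt (euclidean :: 'a topology) \<Gamma>))"
proof (intro conjI impI)
  assume "\<exists>\<Gamma> :: 'g set. atd_wrt (euclidean :: 'a topology) \<Gamma>"
  then obtain \<Gamma> :: "'g set" where "atd_wrt (euclidean :: 'a topology) \<Gamma>" by (elim exE)
  then show "\<exists>P :: ('a \<times> 'a) set.
               (\<forall>(a, b) \<in> P. a < b) \<and>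
               (\<forall>x. countable {(a, b) \<in> P. a < x \<and> x < b}) \<and>
               (\<forall>x y. x < y \<longrightarrow> (\<exists>(a, b) \<in> P. x \<le> a \<and> a < b \<and> b \<le> y))"
    by (rule dir1[OF assms])
next
  assume "\<exists>P :: ('a \<times> 'a) set.
               (\<forall>(a, b) \<in> P. a < b) \<and>
               (\<forall>x. countable {(a, b) \<in> P. a < x \<and> x < b}) \<and>
               (\<forall>x y. x < y \<longrightarrow> (\<exists>(a, b) \<in> P. x \<le> a \<and> a < b \<and> b \<le> y))"
  then obtain P :: "('a \<times> 'a) set" where
    "(\<forall>(a, b) \<in> P. a < b)" "(\<forall>x. countable {(a, b) \<in> P. a < x \<and> x < b})"
    "(\<forall>x y. x < y \<longrightarrow> (\<exists>(a, b) \<in> P. x \<le> a \<and> a < b \<and> b \<le> y))"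
    by (elim exE conjE)
  then have "atd_wrt (euclidean :: 'a topology) P" by (rule dir2[OF assms])
  then show "\<exists>\<Gamma> :: ('a \<times> 'a) set. atd_wrt (euclidean :: 'a topology) \<Gamma>" by (rule exI)
qed

end
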